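(* For every integer $m\ge 2$, the shift graph $H_m$ belongs to $(m-1)$-CBU. Furthermore, $H_m$ has a CBU representation in which, in the first dimension (the coordinate along $e_1$), the box of the vertex $(i,j)$ projects onto the interval $[i,j]$.
   Context: The shift graph $H_m$ has as vertices the ordered pairs $(i,j)$ of integers with $1\le i<j\le m$, and two pairs $(i,j)$ and $(k,l)$ are adjacent iff $j=k$ or $l=i$. Let $e_1,\ldots,e_d$ be the standard basis of $\mathbb{R}^d$. For $d\ge 1$, a graph belongs to $d$-CBU if one can assign to each vertex an axis-parallel box (product of $d$ closed intervals of positive length) in $\mathbb{R}^d$ such that the boxes have pairwise disjoint interiors, two distinct vertices are adjacent iff their boxes intersect, and any two intersecting boxes intersect in a $(d-1)$-dimensional box orthogonal to $e_1$; such an assignment is a CBU representation. *)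

theory Defs
  imports Complex_Main
begin

definition shift_vertices :: "nat \<Rightarrow> (nat \<times> nat) set" where
  "shift_vertices m = {(i, j). 1 \<le> i \<and> i < j \<and> j \<le> m}"

definition shift_adj :: "nat \<times> nat \<Rightarrow> nat \<times> nat \<Rightarrow> bool" where
  "shift_adj p q = (snd p = fst q \<or> snd q = fst p)"

text \<open>Points of R^d are modelled as functions nat => real vanishing outside
  the coordinates 0..d-1; coordinate 0 is the direction e_1.\<close>

definition rspace :: "nat \<Rightarrow> (nat \<Rightarrow> real) set" where
  "rspace d = {x. \<forall>k\<ge>d. x k = 0}"

definition closed_box :: "nat \<Rightarrow> (nat \<Rightarrow> real) \<Rightarrow> (nat \<Rightarrow> real) \<Rightarrow> (nat \<Rightarrow> real) set" where
  "closed_box d lo hi = {x \<in> rspace d. \<forall>k<d. lo k \<le> x k \<and> x k \<le> hi k}"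

definition open_box :: "nat \<Rightarrow> (nat \<Rightarrow> real) \<Rightarrow> (nat \<Rightarrow> real) \<Rightarrow> (nat \<Rightarrow> real) set" where
  "open_box d lo hi = {x \<in> rspace d. \<forall>k<d. lo k < x k \<and> x k < hi k}"

definition orth_facet_box :: "nat \<Rightarrow> (nat \<Rightarrow> real) set \<Rightarrow> bool" where
  "orth_facet_box d S = (\<exists>c a b. (\<forall>k\<in>{1..<d}. a k < b k) \<and>
      S = {x \<in> rspace d. x 0 = c \<and> (\<forall>k\<in>{1..<d}. a k \<le> x k \<and> x k \<le> b k)})"

definition CBU_rep :: "nat \<Rightarrow> 'v set \<Rightarrow> ('v \<Rightarrow> 'v \<Rightarrow> bool)
    \<Rightarrow> ('v \<Rightarrow> nat \<Rightarrow> real) \<Rightarrow> ('v \<Rightarrow> nat \<Rightarrow> real) \<Rightarrow> bool" where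
  "CBU_rep d V adj lo hi =
     ((\<forall>v\<in>V. \<forall>k<d. lo v k < hi v k) \<and>
      (\<forall>u\<in>V. \<forall>v\<in>V. u \<noteq> v \<longrightarrow> open_box d (lo u) (hi u) \<inter> open_box d (lo v) (hi v) = {}) \<and>
      (\<forall>u\<in>V. \<forall>v\<in>V. u \<noteq> v \<longrightarrow>
          (adj u v \<longleftrightarrow> closed_box d (lo u) (hi u) \<inter> closed_box d (lo v) (hi v) \<noteq> {})) \<and>
      (\<forall>u\<in>V. \<forall>v\<in>V. u \<noteq> v \<longrightarrow> closed_box d (lo u) (hi u) \<inter> closed_box d (lo v) (hi v) \<noteq> {} \<longrightarrow>
          orth_facet_box d (closed_box d (lo u) (hi u) \<inter> closed_box d (lo v) (hi v))))"

definition in_CBU :: "nat \<Rightarrow> 'v set \<Rightarrow> ('v \<Rightarrow> 'v \<Rightarrow> bool) \<Rightarrow> bool" where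
  "in_CBU d V adj = (d \<ge> 1 \<and> (\<exists>lo hi. CBU_rep d V adj lo hi))"

end

theory Submission
  imports Defs
begin

definition Lo :: "nat \<times> nat \<Rightarrow> nat \<Rightarrow> real" where
 "Lo p k = (if k = 0 then real (fst p) else if snd p = k+1 \<or> fst p = k+1 then 0
    else if fst p < k+1 \<and> k+1 < snd p then 3 else 0)"
definition Hi :: "nat \<times> nat \<Rightarrow> nat \<Rightarrow> real" where
 "Hi p k = (if k = 0 then real (snd p) else if snd p = k+1 \<or> fst p = k+1 then 2 else 5)"

lemma cb_int: "closed_box d a b \<inter> closed_box d a' b' = closed_box d (\<lambda>k. max (a k) (a' k)) (\<lambda>k. min (b k) (b' k))"
  unfolding closed_box_def by auto

lemma cb_empty: "c < d \<Longrightarrow> a c > b c \<Longrightarrow> closed_box d a b = {}"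
  unfolding closed_box_def by force

lemma ob_empty: "c < d \<Longrightarrow> max (a c) (a' c) \<ge> min (b c) (b' c) \<Longrightarrow> open_box d a b \<inter> open_box d a' b' = {}"
  unfolding open_box_def by force

lemma sep:
  assumes "(i,j) \<in> shift_vertices m" "(k,l) \<in> shift_vertices m" "(i,j) \<noteq> (k,l)"
    "j \<noteq> k" "l \<noteq> i" "max i k < min j l"
  shows "\<exists>c. 1 \<le> c \<and> c < m - 1 \<and> max (Lo (i,j) c) (Lo (k,l) c) > min (Hi (i,j) c) (Hi (k,l) c)"
proof -
  have "\<exists>t. 2 \<le> t \<and> t \<le> m - 1 \<and>
     ((i < t \<and> t < j \<and> (k = t \<or> l = t)) \<or> (k < t \<and> t < l \<and> (i = t \<or> j = t)))"
  proof -
    let ?P = "\<lambda>t. 2 \<le> t \<and> t \<le> m - 1 \<and>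
     ((i < t \<and> t < j \<and> (k = t \<or> l = t)) \<or> (k < t \<and> t < l \<and> (i = t \<or> j = t)))"
    have "?P j \<or> ?P l \<or> ?P k \<or> ?P i" using assms unfolding shift_vertices_def by auto
    then show ?thesis by blast
  qed
  then obtain t where t: "2 \<le> t" "t \<le> m - 1"
     "(i < t \<and> t < j \<and> (k = t \<or> l = t)) \<or> (k < t \<and> t < l \<and> (i = t \<or> j = t))" by blast
  show ?thesis
    apply (rule exI[of _ "t - 1"])
    using t by (auto simp: Lo_def Hi_def)
qed


lemma cb_nonempty: "\<forall>k<d. a k \<le> b k \<Longrightarrow> closed_box d a b \<noteq> {}"
proof -
  assume h: "\<forall>k<d. a k \<le> b k"
  have "(\<lambda>k. if k < d then a k else 0) \<in> closed_box d a b"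
    using h unfolding closed_box_def rspace_def by auto
  then show ?thesis by blast
qed

lemma facet: "0 < d \<Longrightarrow> L 0 = c \<Longrightarrow> H 0 = c \<Longrightarrow> \<forall>k\<in>{1..<d}. L k < H k
   \<Longrightarrow> orth_facet_box d (closed_box d L H)"
  unfolding orth_facet_box_def
  apply (rule exI[of _ c], rule exI[of _ L], rule exI[of _ H])
  apply (auto simp: closed_box_def)
  by (case_tac "k = 0"; force)+

lemma adj_coords:
  assumes "(i,j) \<in> shift_vertices m" "(j,l) \<in> shift_vertices m" "1 \<le> c"
  shows "max (Lo (i,j) c) (Lo (j,l) c) < min (Hi (i,j) c) (Hi (j,l) c)"
  using assms unfolding shift_vertices_def Lo_def Hi_def by auto

lemma pair_ok:
  assumes m: "m \<ge> 2" and u: "u \<in> shift_vertices m" and v: "v \<in> shift_vertices m" and ne: "u \<noteq> v"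
  shows "open_box (m-1) (Lo u) (Hi u) \<inter> open_box (m-1) (Lo v) (Hi v) = {} \<and>
     (shift_adj u v \<longleftrightarrow> closed_box (m-1) (Lo u) (Hi u) \<inter> closed_box (m-1) (Lo v) (Hi v) \<noteq> {}) \<and>
     (closed_box (m-1) (Lo u) (Hi u) \<inter> closed_box (m-1) (Lo v) (Hi v) \<noteq> {} \<longrightarrow>
          orth_facet_box (m-1) (closed_box (m-1) (Lo u) (Hi u) \<inter> closed_box (m-1) (Lo v) (Hi v)))"
proof -
  obtain i j k l where uv: "u = (i,j)" "v = (k,l)" by (cases u, cases v) auto
  have d0: "0 < m - 1" using m by simp
  show ?thesis
  proof (cases "shift_adj u v")
    case True
    have adjc: "\<forall>c\<in>{1..<m-1}. max (Lo u c) (Lo v c) < min (Hi u c) (Hi v c)"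
     and c0: "max (Lo u 0) (Lo v 0) = min (Hi u 0) (Hi v 0)"
      using True u v adj_coords[of i j m l] adj_coords[of k l m j] unfolding uv shift_adj_def
      by (auto simp: Lo_def Hi_def shift_vertices_def max_def min_def)
    have ob: "open_box (m-1) (Lo u) (Hi u) \<inter> open_box (m-1) (Lo v) (Hi v) = {}"
      by (rule ob_empty[OF d0]) (use c0 in simp)
    have "\<forall>c<m-1. max (Lo u c) (Lo v c) \<le> min (Hi u c) (Hi v c)"
      using adjc c0 by (metis atLeastLessThan_iff less_eq_real_def less_one not_le)
    then have nz: "closed_box (m-1) (Lo u) (Hi u) \<inter> closed_box (m-1) (Lo v) (Hi v) \<noteq> {}"
      unfolding cb_int by (rule cb_nonempty)
    have "orth_facet_box (m-1) (closed_box (m-1) (Lo u) (Hi u) \<inter> closed_box (m-1) (Lo v) (Hi v))"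
      unfolding cb_int by (rule facet[OF d0, where c="max (Lo u 0) (Lo v 0)"]) (use c0 adjc in auto)
    then show ?thesis using ob nz True by simp
  next
    case False
    have "\<exists>c<m-1. max (Lo u c) (Lo v c) > min (Hi u c) (Hi v c)"
    proof (cases "max i k < min j l")
      case True
      then show ?thesis using sep[of i j m k l] u v ne False unfolding uv shift_adj_def
        by fastforce
    next
      case nov: False
      have "max (Lo u 0) (Lo v 0) > min (Hi u 0) (Hi v 0)"
        using nov False u v unfolding uv shift_adj_def by (auto simp: Lo_def Hi_def max_def min_def shift_vertices_def split: if_splits)
      then show ?thesis using d0 by blast
    qed
    then obtain c where c: "c < m-1" "max (Lo u c) (Lo v c) > min (Hi u c) (Hi v c)" by blast
    have "open_box (m-1) (Lo u) (Hi u) \<inter> open_box (m-1) (Lo v) (Hi v) = {}"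
      by (rule ob_empty[OF c(1)]) (use c(2) in simp)
    moreover have "closed_box (m-1) (Lo u) (Hi u) \<inter> closed_box (m-1) (Lo v) (Hi v) = {}"
      unfolding cb_int by (rule cb_empty[OF c(1)]) (use c(2) in simp)
    ultimately show ?thesis using False by simp
  qed
qed

theorem mainTheorem11:
  fixes m :: nat
  assumes "m \<ge> 2"
  shows "in_CBU (m - 1) (shift_vertices m) shift_adj \<and>
         (\<exists>lo hi. CBU_rep (m - 1) (shift_vertices m) shift_adj lo hi \<and>
            (\<forall>i j. (i, j) \<in> shift_vertices m \<longrightarrow>
                lo (i, j) 0 = real i \<and> hi (i, j) 0 = real j))"
proof -
  have pos: "\<forall>v\<in>shift_vertices m. \<forall>k<m-1. Lo v k < Hi v k"
    by (auto simp: shift_vertices_def Lo_def Hi_def)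
  have rep: "CBU_rep (m - 1) (shift_vertices m) shift_adj Lo Hi"
    unfolding CBU_rep_def using pos pair_ok[OF assms] by blast
  have "in_CBU (m - 1) (shift_vertices m) shift_adj"
    unfolding in_CBU_def using rep assms by auto
  moreover have "\<forall>i j. (i, j) \<in> shift_vertices m \<longrightarrow> Lo (i, j) 0 = real i \<and> Hi (i, j) 0 = real j"
    by (simp add: Lo_def Hi_def)
  ultimately show ?thesis using rep by blast
qed

end
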